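(* Let $A,B,C$ be non-collinear points of the real affine plane. Let $A^{+},A^{-}$ be points on line $\overleftrightarrow{BC}$, $B^{+},B^{-}$ points on line $\overleftrightarrow{CA}$, and $C^{+},C^{-}$ points on line $\overleftrightarrow{AB}$, with $A^{+}\neq C$, $A^{-}\neq B$, $B^{+}\neq A$, $B^{-}\neq C$, $C^{+}\neq B$, $C^{-}\neq A$, and define $$a^{+}=\frac{|BA^{+}|}{|A^{+}C|},\quad b^{+}=\frac{|CB^{+}|}{|B^{+}A|},\quad c^{+}=\frac{|AC^{+}|}{|C^{+}B|},\quad a^{-}=\frac{|CA^{-}|}{|A^{-}B|},\quad b^{-}=\frac{|AB^{-}|}{|B^{-}C|},\quad c^{-}=\frac{|BC^{-}|}{|C^{-}A|}.$$ Suppose $(1+b^{-}+c^{+})(1+c^{-}+a^{+})(1+a^{-}+b^{+})\neq 0$, so that the points $X=\overleftrightarrow{BB^{-}}\cap\overleftrightarrow{CC^{+}}$, $Y=\overleftrightarrow{CC^{-}}\cap\overleftrightarrow{AA^{+}}$, $Z=\overleftrightarrow{AA^{-}}\cap\overleftrightarrow{BB^{+}}$ are finite points. Then the signed area of triangle $XYZ$ is $$|\triangle XYZ|=|\triangle ABC|\cdot\frac{a^{+}b^{+}c^{+}+a^{-}b^{-}c^{-}-a^{+}a^{-}-b^{+}b^{-}-c^{+}c^{-}+1}{(1+b^{-}+c^{+})(1+c^{-}+a^{+})(1+a^{-}+b^{+})}.$$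
   Context: Segment lengths are signed: for points on one of the lines $\overleftrightarrow{AB}$, $\overleftrightarrow{BC}$, $\overleftrightarrow{CA}$, $|PQ|$ is positive when $\overrightarrow{PQ}$ points in the direction of $\overrightarrow{AB}$, $\overrightarrow{BC}$, $\overrightarrow{CA}$ respectively; $|PP|/|PQ|=0$. Equivalently, e.g. $A^{+}=(B+a^{+}C)/(1+a^{+})$, $A^{-}=(a^{-}B+C)/(1+a^{-})$ as vectors, and similarly for the others. Triangle areas are signed: $|\triangle XYZ|$ and $|\triangle ABC|$ have the same sign exactly when the vertex paths $X$-$Y$-$Z$-$X$ and $A$-$B$-$C$-$A$ traverse their triangles in the same rotational direction. *)

theory Defs
  imports "HOL-Analysis.Analysis"
begin

text \<open>Signed ratio |PQ|/|RS| of segments lying on a common line with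
  reference direction d: signed lengths are measured along d.\<close>
definition sratio :: "real^2 \<Rightarrow> real^2 \<Rightarrow> real^2 \<Rightarrow> real^2 \<Rightarrow> real^2 \<Rightarrow> real" where
  "sratio d P Q R S = ((Q - P) \<bullet> d) / ((S - R) \<bullet> d)"

text \<open>Signed area of triangle PQR (positive iff P-Q-R is counterclockwise).\<close>
definition signed_area :: "real^2 \<Rightarrow> real^2 \<Rightarrow> real^2 \<Rightarrow> real" where
  "signed_area P Q R =
     ((Q$1 - P$1) * (R$2 - P$2) - (Q$2 - P$2) * (R$1 - P$1)) / 2"

end

theory Submission
  imports Defs
begin

lemma indep2:
  fixes P Q R :: "real^2"
  assumes "\<not> collinear {P, Q, R}" "a *\<^sub>R (Q - P) + b *\<^sub>R (R - P) = 0"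
  shows "a = 0 \<and> b = 0"
proof (rule ccontr)
  assume h: "\<not> (a = 0 \<and> b = 0)"
  have c: "collinear {0, Q - P, R - P}"
  proof (cases "a = 0")
    case True
    then have "b \<noteq> 0" using h by auto
    then have "R - P = 0" using assms(2) True by simp
    then show ?thesis by (simp add: collinear_lemma)
  next
    case False
    then have "Q - P = (- b / a) *\<^sub>R (R - P)"
    proof -
      have "a *\<^sub>R (Q - P) = - (b *\<^sub>R (R - P))" using assms(2) by (simp add: eq_neg_iff_add_eq_0)
      then have "(1/a) *\<^sub>R (a *\<^sub>R (Q - P)) = (1/a) *\<^sub>R (- (b *\<^sub>R (R - P)))" by simp
      then show ?thesis using False by (simp add: divide_inverse)
    qed
    then show ?thesis
      by (metis collinear_lemma insert_commute)
  qed
  have "collinear {Q, P, R}" using c collinear_3[of Q P R]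
    by (cases "Q = 0") (auto simp: collinear_3)
  then show False using assms(1) by (simp add: insert_commute)
qed

lemma on_line:
  fixes x a b :: "real^2"
  assumes "x \<in> affine hull {a, b}"
  shows "\<exists>t. x = a + t *\<^sub>R (b - a)"
proof -
  obtain u v where "x = u *\<^sub>R a + v *\<^sub>R b" "u + v = 1" using assms by (auto simp: affine_hull_2)
  then have "x = a + v *\<^sub>R (b - a)" by (simp add: algebra_simps flip: scaleR_add_left)
  then show ?thesis by blast
qed

lemma ratio:
  assumes "Q = P + g *\<^sub>R (R - P)" "d = k *\<^sub>R (R - P)" "k \<noteq> 0" "P \<noteq> R"
  shows "sratio d P Q Q R = g / (1 - g)"
proof -
  have n: "(R - P) \<bullet> (R - P) \<noteq> 0" using assms(4) by simp
  have "Q - P = g *\<^sub>R (R - P)" "R - Q = (1 - g) *\<^sub>R (R - P)" using assms(1) by (auto simp: algebra_simps)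
  then show ?thesis using assms n by (simp add: sratio_def)
qed

lemma area:
  fixes A B C :: "real^2"
  shows "signed_area (A + u1 *\<^sub>R (B - A) + v1 *\<^sub>R (C - A)) (A + u2 *\<^sub>R (B - A) + v2 *\<^sub>R (C - A))
     (A + u3 *\<^sub>R (B - A) + v3 *\<^sub>R (C - A))
   = signed_area A B C * ((u2 - u1) * (v3 - v1) - (v2 - v1) * (u3 - u1))"
  unfolding signed_area_def by (simp add: vector_add_component vector_minus_component) (simp add: algebra_simps)

lemma meet:
  fixes P Q R X :: "real^2"
  assumes nc: "\<not> collinear {P, Q, R}" and b1: "b \<noteq> 1" and g1: "g \<noteq> 1"
    and s: "1 + g / (1 - g) + b / (1 - b) \<noteq> 0"
    and X1: "X \<in> affine hull {Q, P + b *\<^sub>R (R - P)}"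
    and X2: "X \<in> affine hull {R, P + g *\<^sub>R (Q - P)}"
  shows "X = P + ((g / (1 - g)) / (1 + g / (1 - g) + b / (1 - b))) *\<^sub>R (Q - P)
             + ((b / (1 - b)) / (1 + g / (1 - g) + b / (1 - b))) *\<^sub>R (R - P)"
proof -
  obtain t where t: "X = Q + t *\<^sub>R (P + b *\<^sub>R (R - P) - Q)" using on_line[OF X1] by blast
  obtain r where r: "X = R + r *\<^sub>R (P + g *\<^sub>R (Q - P) - R)" using on_line[OF X2] by blast
  have e1: "X = P + (1 - t) *\<^sub>R (Q - P) + (t * b) *\<^sub>R (R - P)" using t by (simp add: algebra_simps)
  have e2: "X = P + (r * g) *\<^sub>R (Q - P) + (1 - r) *\<^sub>R (R - P)" using r by (simp add: algebra_simps)
  have "((1 - t) - r * g) *\<^sub>R (Q - P) + (t * b - (1 - r)) *\<^sub>R (R - P) = 0"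
    using e1 e2 by (simp add: algebra_simps)
  from indep2[OF nc this] have E1: "1 - t = r * g" and E2: "t * b = 1 - r" by auto
  have b1': "1 - b \<noteq> 0" and g1': "1 - g \<noteq> 0" using b1 g1 by auto
  have s': "1 + g / (1 - g) + b / (1 - b) = (1 - g * b) / ((1 - g) * (1 - b))"
  proof -
    have "1 + g / (1 - g) + b / (1 - b) = ((1 - g) * (1 - b) + g * (1 - b) + b * (1 - g)) / ((1 - g) * (1 - b))"
      using b1' g1' by (simp add: add_divide_distrib)
    also have "(1 - g) * (1 - b) + g * (1 - b) + b * (1 - g) = 1 - g * b" by algebra
    finally show ?thesis .
  qed
  have gb: "1 - g * b \<noteq> 0" using s s' by auto
  have h: "1 - t = g * (1 - t * b)" using E1 E2 by simp
  have T0: "t * (1 - g * b) = 1 - g" using h by algebra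
  have c1: "1 - t = (g / (1 - g)) / (1 + g / (1 - g) + b / (1 - b))"
  proof -
    have "(g / (1 - g)) / ((1 - g * b) / ((1 - g) * (1 - b))) = g * (1 - b) / (1 - g * b)"
      using b1' g1' gb by simp
    also have "\<dots> = 1 - t"
    proof -
      have "(1 - t) * (1 - g * b) = g * (1 - b)" using T0 by algebra
      then show ?thesis using gb by (simp add: divide_eq_eq)
    qed
    finally show ?thesis unfolding s' by simp
  qed
  have c2: "t * b = (b / (1 - b)) / (1 + g / (1 - g) + b / (1 - b))"
  proof -
    have "(b / (1 - b)) / ((1 - g * b) / ((1 - g) * (1 - b))) = b * (1 - g) / (1 - g * b)"
      using b1' g1' gb by simp
    also have "\<dots> = t * b"
    proof -
      have e: "b * (1 - g) = (t * b) * (1 - g * b)" using T0 by algebra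
      show ?thesis unfolding e using gb by simp
    qed
    finally show ?thesis unfolding s' by simp
  qed
  show ?thesis using e1 c1 c2 by simp
qed


lemma key: fixes ap am bp bm cp cm :: real
 assumes sx: "1 + cp + bm \<noteq> 0" and sy: "1 + ap + cm \<noteq> 0" and sz: "1 + bp + am \<noteq> 0"
 shows "(1 / (1 + ap + cm) - cp / (1 + cp + bm)) * (1 / (1 + bp + am) - bm / (1 + cp + bm)) -
       (ap / (1 + ap + cm) - bm / (1 + cp + bm)) * (am / (1 + bp + am) - cp / (1 + cp + bm))
     = (ap * bp * cp + am * bm * cm - ap * am - bp * bm - cp * cm + 1)
               / ((1 + bm + cp) * (1 + cm + ap) * (1 + am + bp))"
proof -
  define x where "x = 1 + cp + bm"
  define y where "y = 1 + ap + cm"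
  define z where "z = 1 + bp + am"
  have nx: "x \<noteq> 0" "y \<noteq> 0" "z \<noteq> 0" using sx sy sz by (simp_all add: x_def y_def z_def)
  have e: "1 + bm + cp = x" "1 + cm + ap = y" "1 + am + bp = z" by (simp_all add: x_def y_def z_def)
  have "(1 / y - cp / x) * (1 / z - bm / x) - (ap / y - bm / x) * (am / z - cp / x)
    = ((x - cp*y) * (x - bm*z) - (ap*x - bm*y)*(am*x - cp*z)) / (x*x*y*z)"
    using nx by (simp add: field_simps)
  also have "((x - cp*y) * (x - bm*z) - (ap*x - bm*y)*(am*x - cp*z)) = x * (ap * bp * cp + am * bm * cm - ap * am - bp * bm - cp * cm + 1)"
    unfolding x_def y_def z_def by algebra
  also have "x * (ap * bp * cp + am * bm * cm - ap * am - bp * bm - cp * cm + 1) / (x*x*y*z) = (ap * bp * cp + am * bm * cm - ap * am - bp * bm - cp * cm + 1) / (x*y*z)"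
    using nx by simp
  finally show ?thesis unfolding e x_def[symmetric] y_def[symmetric] z_def[symmetric] .
qed

theorem theorem5:
  fixes A B C Ap Am Bp Bm Cp Cm X Y Z :: "real^2"
  assumes ncol: "\<not> collinear {A, B, C}"
    and onA: "Ap \<in> affine hull {B, C}" "Am \<in> affine hull {B, C}"
    and onB: "Bp \<in> affine hull {C, A}" "Bm \<in> affine hull {C, A}"
    and onC: "Cp \<in> affine hull {A, B}" "Cm \<in> affine hull {A, B}"
    and ne: "Ap \<noteq> C" "Am \<noteq> B" "Bp \<noteq> A" "Bm \<noteq> C" "Cp \<noteq> B" "Cm \<noteq> A"
    and nz: "(1 + sratio (A - C) A Bm Bm C + sratio (B - A) A Cp Cp B)
           * (1 + sratio (B - A) B Cm Cm A + sratio (C - B) B Ap Ap C)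
           * (1 + sratio (C - B) C Am Am B + sratio (A - C) C Bp Bp A) \<noteq> 0"
    and X: "X \<in> affine hull {B, Bm}" "X \<in> affine hull {C, Cp}"
    and Y: "Y \<in> affine hull {C, Cm}" "Y \<in> affine hull {A, Ap}"
    and Z: "Z \<in> affine hull {A, Am}" "Z \<in> affine hull {B, Bp}"
  shows "let ap = sratio (C - B) B Ap Ap C; bp = sratio (A - C) C Bp Bp A;
             cp = sratio (B - A) A Cp Cp B; am = sratio (C - B) C Am Am B;
             bm = sratio (A - C) A Bm Bm C; cm = sratio (B - A) B Cm Cm A
         in signed_area X Y Z = signed_area A B C *
              ((ap * bp * cp + am * bm * cm - ap * am - bp * bm - cp * cm + 1)
               / ((1 + bm + cp) * (1 + cm + ap) * (1 + am + bp)))"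
proof -
  have ncB: "\<not> collinear {B, C, A}" using ncol by (simp add: insert_commute)
  have ncC: "\<not> collinear {C, A, B}" using ncol by (simp add: insert_commute)
  have AB: "A \<noteq> B" using ncol by (metis collinear_2 insert_absorb2)
  have BC: "B \<noteq> C" using ncol by (metis collinear_2 insert_absorb2 insert_commute)
  have CA: "C \<noteq> A" using ncol by (metis collinear_2 insert_absorb2 insert_commute)
  obtain al where al: "Ap = B + al *\<^sub>R (C - B)" using on_line[OF onA(1)] by blast
  obtain al' where al': "Am = C + al' *\<^sub>R (B - C)" using on_line[of Am C B] onA(2) by (auto simp: insert_commute)
  obtain be where be: "Bp = C + be *\<^sub>R (A - C)" using on_line[OF onB(1)] by blast
  obtain be' where be': "Bm = A + be' *\<^sub>R (C - A)" using on_line[of Bm A C] onB(2) by (auto simp: insert_commute)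
  obtain ga where ga: "Cp = A + ga *\<^sub>R (B - A)" using on_line[OF onC(1)] by blast
  obtain ga' where ga': "Cm = B + ga' *\<^sub>R (A - B)" using on_line[of Cm B A] onC(2) by (auto simp: insert_commute)
  have al1: "al \<noteq> 1" using al ne(1) by auto
  have al1': "al' \<noteq> 1" using al' ne(2) by auto
  have be1: "be \<noteq> 1" using be ne(3) by auto
  have be1': "be' \<noteq> 1" using be' ne(4) by auto
  have ga1: "ga \<noteq> 1" using ga ne(5) by auto
  have ga1': "ga' \<noteq> 1" using ga' ne(6) by auto
  define ap where "ap = al / (1 - al)"
  define am where "am = al' / (1 - al')"
  define bp where "bp = be / (1 - be)"
  define bm where "bm = be' / (1 - be')"
  define cp where "cp = ga / (1 - ga)"
  define cm where "cm = ga' / (1 - ga')"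
  have rap: "sratio (C - B) B Ap Ap C = ap" unfolding ap_def by (rule ratio[OF al, of _ 1]) (use BC in auto)
  have ram: "sratio (C - B) C Am Am B = am" unfolding am_def by (rule ratio[OF al', of _ "-1"]) (use BC in auto)
  have rbp: "sratio (A - C) C Bp Bp A = bp" unfolding bp_def by (rule ratio[OF be, of _ 1]) (use CA in auto)
  have rbm: "sratio (A - C) A Bm Bm C = bm" unfolding bm_def by (rule ratio[OF be', of _ "-1"]) (use CA in auto)
  have rcp: "sratio (B - A) A Cp Cp B = cp" unfolding cp_def by (rule ratio[OF ga, of _ 1]) (use AB in auto)
  have rcm: "sratio (B - A) B Cm Cm A = cm" unfolding cm_def by (rule ratio[OF ga', of _ "-1"]) (use AB in auto)
  have nz': "(1 + bm + cp) * (1 + cm + ap) * (1 + am + bp) \<noteq> 0" using nz rap ram rbp rbm rcp rcm by simp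
  then have "1 + bm + cp \<noteq> 0" "1 + cm + ap \<noteq> 0" "1 + am + bp \<noteq> 0" by auto
  then have sx: "1 + cp + bm \<noteq> 0" and sy: "1 + ap + cm \<noteq> 0" and sz: "1 + bp + am \<noteq> 0"
    by (simp_all add: add_ac)
  have Xe: "X = A + (cp / (1 + cp + bm)) *\<^sub>R (B - A) + (bm / (1 + cp + bm)) *\<^sub>R (C - A)"
    unfolding cp_def bm_def
    by (rule meet[OF ncol be1' ga1]) (use sx X be' ga in \<open>auto simp: cp_def bm_def insert_commute\<close>)
  have Ye0: "Y = B + (ap / (1 + ap + cm)) *\<^sub>R (C - B) + (cm / (1 + ap + cm)) *\<^sub>R (A - B)"
    unfolding ap_def cm_def
    by (rule meet[OF ncB ga1' al1]) (use sy Y al ga' in \<open>auto simp: ap_def cm_def insert_commute\<close>)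
  have Ze0: "Z = C + (bp / (1 + bp + am)) *\<^sub>R (A - C) + (am / (1 + bp + am)) *\<^sub>R (B - C)"
    unfolding bp_def am_def
    by (rule meet[OF ncC al1' be1]) (use sz Z be al' in \<open>auto simp: bp_def am_def insert_commute\<close>)
  have Ye: "Y = A + (1 / (1 + ap + cm)) *\<^sub>R (B - A) + (ap / (1 + ap + cm)) *\<^sub>R (C - A)"
  proof -
    have "1 / (1 + ap + cm) = 1 - ap / (1 + ap + cm) - cm / (1 + ap + cm)" using sy by (simp add: field_simps)
    moreover have "Y = A + (1 - ap / (1 + ap + cm) - cm / (1 + ap + cm)) *\<^sub>R (B - A) + (ap / (1 + ap + cm)) *\<^sub>R (C - A)"
      unfolding Ye0 by (simp add: algebra_simps scaleR_diff_left)
    ultimately show ?thesis by simp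
  qed
  have Ze: "Z = A + (am / (1 + bp + am)) *\<^sub>R (B - A) + (1 / (1 + bp + am)) *\<^sub>R (C - A)"
  proof -
    have "1 / (1 + bp + am) = 1 - bp / (1 + bp + am) - am / (1 + bp + am)" using sz by (simp add: field_simps)
    moreover have "Z = A + (am / (1 + bp + am)) *\<^sub>R (B - A) + (1 - bp / (1 + bp + am) - am / (1 + bp + am)) *\<^sub>R (C - A)"
      unfolding Ze0 by (simp add: algebra_simps scaleR_diff_left)
    ultimately show ?thesis by simp
  qed
  note key = key[OF sx sy sz]
  show ?thesis unfolding Let_def rap ram rbp rbm rcp rcm Xe Ye Ze area key ..
qed


end
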